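(* Let $\alpha>0$ and let $\lambda$ be a partition of $n$ chosen from the Jack$_\alpha$ measure. \begin{enumerate} \item For every integer $m \geq 1$, $\mathbb{E}\left( \prod_{x\in\lambda} (m + c_\alpha(x)) \right) = m^n$. \item For $1 \leq r \leq n$, let $e_{r,\alpha}(\lambda)$ denote the $r$-th elementary symmetric function of the $n$ $\alpha$-contents $c_\alpha(x)$, $x\in\lambda$. Then $\mathbb{E}(e_{r,\alpha}(\lambda)) = 0$ for $1 \leq r \leq n$. \end{enumerate}
   Context: For $\alpha>0$, the Jack$_\alpha$ measure on partitions of $n$ chooses $\lambda$ with probability \[ \frac{\alpha^n n!}{\prod_{x\in\lambda}(\alpha a(x) + l(x) + 1)(\alpha a(x) + l(x) + \alpha)}, \] where $a(x)$ is the number of boxes in the same row as $x$ and to its right, and $l(x)$ is the number of boxes in the same column as $x$ and below it. The $\alpha$-content of a box $x$ is $c_\alpha(x) = \alpha(\text{column number of } x - 1) - (\text{row number of } x - 1)$. The $r$-th elementary symmetric function is $e_r(z_1,\dots,z_n)=\sum_{1\le i_1<\cdots<i_r\le n} z_{i_1}\cdots z_{i_r}$. *)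

theory Defs
  imports Complex_Main
begin

definition is_partition :: "nat list \<Rightarrow> bool" where
  "is_partition lam \<longleftrightarrow> (\<forall>i. Suc i < length lam \<longrightarrow> lam ! Suc i \<le> lam ! i) \<and> (\<forall>p\<in>set lam. 0 < p)"

definition partitions :: "nat \<Rightarrow> nat list set" where
  "partitions n = {lam. is_partition lam \<and> sum_list lam = n}"

text \<open>Boxes (i,j): row i, column j, both 0-indexed.\<close>
definition boxes :: "nat list \<Rightarrow> (nat \<times> nat) set" where
  "boxes lam = {(i, j). i < length lam \<and> j < lam ! i}"

definition arm :: "nat list \<Rightarrow> nat \<times> nat \<Rightarrow> nat" where
  "arm lam x = card {j'. (fst x, j') \<in> boxes lam \<and> snd x < j'}"

definition leg :: "nat list \<Rightarrow> nat \<times> nat \<Rightarrow> nat" where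
  "leg lam x = card {i'. (i', snd x) \<in> boxes lam \<and> fst x < i'}"

definition jack_prob :: "real \<Rightarrow> nat \<Rightarrow> nat list \<Rightarrow> real" where
  "jack_prob \<alpha> n lam = \<alpha> ^ n * fact n /
     (\<Prod>x\<in>boxes lam. (\<alpha> * arm lam x + leg lam x + 1) * (\<alpha> * arm lam x + leg lam x + \<alpha>))"

text \<open>alpha-content: alpha*(column-1) - (row-1) in 1-indexed terms.\<close>
definition content :: "real \<Rightarrow> nat \<times> nat \<Rightarrow> real" where
  "content \<alpha> x = \<alpha> * real (snd x) - real (fst x)"

definition jack_expect :: "real \<Rightarrow> nat \<Rightarrow> (nat list \<Rightarrow> real) \<Rightarrow> real" where
  "jack_expect \<alpha> n f = (\<Sum>lam\<in>partitions n. jack_prob \<alpha> n lam * f lam)"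

definition elem_content :: "real \<Rightarrow> nat \<Rightarrow> nat list \<Rightarrow> real" where
  "elem_content \<alpha> r lam = (\<Sum>S\<in>{S. S \<subseteq> boxes lam \<and> card S = r}. \<Prod>x\<in>S. content \<alpha> x)"

end

theory Submission
  imports Defs "HOL-Computational_Algebra.Polynomial"
begin

hide_const (open) Polynomial.content



definition lp :: "(nat \<Rightarrow> real) \<Rightarrow> nat set \<Rightarrow> real poly" where
  "lp a A = (\<Prod>k\<in>A. [:- a k, 1:])"

lemma lp_nz: "lp a A \<noteq> 0"
proof -
  have "lead_coeff (lp a A) = 1" using lead_coeff_prod[of "\<lambda>k. [:- a k, 1:]" A] unfolding lp_def by simp
  then show ?thesis by auto
qed

lemma degree_lp: "finite A \<Longrightarrow> degree (lp a A) = card A"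
  unfolding lp_def by (subst degree_prod_eq_sum_degree) auto

lemma lead_lp: "finite A \<Longrightarrow> coeff (lp a A) (card A) = 1"
  using lead_coeff_prod[of "\<lambda>k. [:- a k, 1:]" A] degree_lp[of A a] unfolding lp_def by simp

lemma poly_lp: "poly (lp a A) x = (\<Prod>k\<in>A. x - a k)"
  unfolding lp_def poly_prod by simp

lemma lagrange1:
  fixes z :: "nat \<Rightarrow> real"
  assumes inj: "inj_on z {..<N}" and N: "N \<ge> 1" and deg: "degree T < N"
  shows "(\<Sum>r<N. poly T (z r) / (\<Prod>k\<in>{..<N}-{r}. z r - z k)) = coeff T (N - 1)"
proof -
  define c where "c r = poly T (z r) / (\<Prod>k\<in>{..<N}-{r}. z r - z k)" for r
  define L where "L = (\<Sum>r<N. smult (c r) (lp z ({..<N}-{r})))"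
  have Dnz: "(\<Prod>k\<in>{..<N}-{r}. z r - z k) \<noteq> 0" if "r < N" for r
    using inj that by (auto simp: inj_on_def)
  have val: "poly L (z s) = poly T (z s)" if s: "s < N" for s
  proof -
    have "poly L (z s) = (\<Sum>r<N. c r * (\<Prod>k\<in>{..<N}-{r}. z s - z k))"
      unfolding L_def poly_sum by (simp add: poly_lp)
    also have "\<dots> = c s * (\<Prod>k\<in>{..<N}-{s}. z s - z k)"
    proof -
      have "(\<Sum>r\<in>{..<N}-{s}. c r * (\<Prod>k\<in>{..<N}-{r}. z s - z k)) = 0"
      proof (rule sum.neutral, intro ballI)
        fix r assume "r \<in> {..<N}-{s}"
        then have "s \<in> {..<N}-{r}" using s by auto
        then have "(\<Prod>k\<in>{..<N}-{r}. z s - z k) = 0" by (intro prod_zero) auto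
        then show "c r * (\<Prod>k\<in>{..<N}-{r}. z s - z k) = 0" by simp
      qed
      then show ?thesis using sum.remove[of "{..<N}" s "\<lambda>r. c r * (\<Prod>k\<in>{..<N}-{r}. z s - z k)"] s by simp
    qed
    also have "\<dots> = poly T (z s)" unfolding c_def using Dnz[OF s] by simp
    finally show ?thesis .
  qed
  have cardK: "card ({..<N}-{r}) = N - 1" if "r < N" for r using that by simp
  have degL: "degree L \<le> N - 1"
    unfolding L_def
    by (rule degree_sum_le) (auto intro: order.trans[OF degree_smult_le] simp: degree_lp cardK)
  have LT: "L = T"
  proof (rule ccontr)
    assume ne: "L \<noteq> T"
    then have nz: "L - T \<noteq> 0" by simp
    have "z ` {..<N} \<subseteq> {x. poly (L - T) x = 0}" using val by auto
    then have "card (z ` {..<N}) \<le> card {x. poly (L - T) x = 0}"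
      by (intro card_mono poly_roots_finite nz)
    also have "\<dots> \<le> degree (L - T)" by (rule card_poly_roots_bound[OF nz])
    also have "\<dots> \<le> max (degree L) (degree T)" by (rule degree_diff_le_max)
    also have "\<dots> < N" using degL deg N by auto
    finally show False using card_image[OF inj] by simp
  qed
  have "coeff L (N - 1) = (\<Sum>r<N. c r)"
    unfolding L_def coeff_sum coeff_smult
    by (rule sum.cong[OF refl]) (metis lead_lp[of "{..<N}-_" z] cardK finite_Diff finite_lessThan lessThan_iff mult.right_neutral)
  then show ?thesis using LT unfolding c_def by simp
qed


lemma coeff_mul_lin: "coeff (p * [:c, 1:]) (Suc i) = c * coeff p (Suc i) + coeff p i" for p :: "real poly"
proof -
  have "p * [:c, 1:] = smult c p + pCons 0 p"
    by (simp add: mult_pCons_right pCons_one[symmetric])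
  then show ?thesis by simp
qed

lemma lp_Suc: "lp a {..<Suc m} = lp a {..<m} * [:- a m, 1:]"
  unfolding lp_def by (simp add: mult.commute)

lemma coeff_lp_top: "coeff (lp a {..<m}) m = 1"
  using lead_lp[of "{..<m}" a] by simp

lemma coeff_lp_1: "coeff (lp a {..<Suc m}) m = - (\<Sum>k<Suc m. a k)"
proof (induction m)
  case 0 then show ?case by (simp add: lp_def)
next
  case (Suc m)
  show ?case unfolding lp_Suc[of a "Suc m"] coeff_mul_lin Suc coeff_lp_top
    using coeff_lp_top[of a "Suc m"] by simp
qed

definition e2 :: "(nat \<Rightarrow> real) \<Rightarrow> nat \<Rightarrow> real" where
  "e2 a m = (\<Sum>j<m. \<Sum>i<j. a i * a j)"

lemma e2_Suc: "e2 a (Suc m) = e2 a m + a m * (\<Sum>i<m. a i)"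
  unfolding e2_def by (simp add: sum_distrib_left mult.commute)

lemma coeff_lp_2: "coeff (lp a {..<Suc (Suc m)}) m = e2 a (Suc (Suc m))"
proof (induction m)
  case 0 then show ?case by (simp add: lp_def e2_def)
next
  case (Suc m)
  show ?case unfolding lp_Suc[of a "Suc (Suc m)"] coeff_mul_lin Suc coeff_lp_1 e2_Suc[of a "Suc (Suc m)"]
    by (simp add: algebra_simps)
qed

lemma e2_shift: "e2 (\<lambda>k. a k + 1) m - e2 a m = (real m - 1) * (\<Sum>k<m. a k) + real m * (real m - 1) / 2"
proof (induction m)
  case 0 then show ?case by (simp add: e2_def)
next
  case (Suc m)
  have "e2 (\<lambda>k. a k + 1) (Suc m) - e2 a (Suc m) = (e2 (\<lambda>k. a k + 1) m - e2 a m) + (a m + 1) * (\<Sum>i<m. a i + 1) - a m * (\<Sum>i<m. a i)"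
    unfolding e2_Suc by simp
  also have "\<dots> = (real m - 1) * (\<Sum>k<m. a k) + real m * (real m - 1) / 2 + (a m + 1) * ((\<Sum>i<m. a i) + real m) - a m * (\<Sum>i<m. a i)"
    unfolding Suc by (simp add: sum.distrib)
  also have "\<dots> = (real (Suc m) - 1) * (\<Sum>k<Suc m. a k) + real (Suc m) * (real (Suc m) - 1) / 2"
    by (simp add: field_simps)
  finally show ?case .
qed

lemma degree_less_if:
  fixes p :: "real poly"
  assumes "degree p \<le> N" "coeff p N = 0" "N \<ge> 1"
  shows "degree p < N"
proof (rule ccontr)
  assume "\<not> degree p < N"
  then have "degree p = N" using assms by simp
  then have "p = 0" using assms(2) leading_coeff_0_iff by metis
  then show False using \<open>degree p = N\<close> assms(3) by simp
qed

lemma lagrange2: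
  fixes z :: "nat \<Rightarrow> real"
  assumes inj: "inj_on z {..<N}" and N: "N \<ge> 1" and deg: "degree T \<le> N"
  shows "(\<Sum>r<N. poly T (z r) / (\<Prod>k\<in>{..<N}-{r}. z r - z k)) = coeff T (N - 1) + coeff T N * (\<Sum>k<N. z k)"
proof -
  define T' where "T' = T - smult (coeff T N) (lp z {..<N})"
  have dl: "degree (lp z {..<N}) = N" by (simp add: degree_lp)
  have d: "degree T' < N"
  proof (rule degree_less_if[OF _ _ N])
    show "degree T' \<le> N" unfolding T'_def
      by (rule order.trans[OF degree_diff_le_max]) (use deg degree_smult_le[of "coeff T N" "lp z {..<N}"] dl in auto)
    show "coeff T' N = 0" unfolding T'_def by (simp add: coeff_lp_top)
  qed
  have pv: "poly T' (z r) = poly T (z r)" if "r < N" for r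
  proof -
    have "poly (lp z {..<N}) (z r) = 0" unfolding poly_lp using that by (intro prod_zero) auto
    then show ?thesis unfolding T'_def by simp
  qed
  have "(\<Sum>r<N. poly T (z r) / (\<Prod>k\<in>{..<N}-{r}. z r - z k)) = (\<Sum>r<N. poly T' (z r) / (\<Prod>k\<in>{..<N}-{r}. z r - z k))"
    using pv by simp
  also have "\<dots> = coeff T' (N - 1)" by (rule lagrange1[OF inj N d])
  also have "\<dots> = coeff T (N - 1) + coeff T N * (\<Sum>k<N. z k)"
  proof -
    obtain m where m: "N = Suc m" using N by (cases N) auto
    show ?thesis unfolding T'_def m coeff_diff coeff_smult by (simp add: coeff_lp_1 algebra_simps)
  qed
  finally show ?thesis .
qed




definition Hc :: "real \<Rightarrow> real \<Rightarrow> nat list \<Rightarrow> real" where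
  "Hc \<alpha> c v = (\<Prod>x\<in>boxes v. \<alpha> * real (arm v x) + real (leg v x) + c)"

definition cnt :: "nat list \<Rightarrow> nat \<Rightarrow> nat" where
  "cnt \<mu> j = card {k. k < length \<mu> \<and> j < \<mu>!k}"

definition rowprod :: "real \<Rightarrow> real \<Rightarrow> nat \<Rightarrow> nat list \<Rightarrow> real" where
  "rowprod \<alpha> c a \<mu> = (\<Prod>j<a. \<alpha> * real (a - 1 - j) + real (cnt \<mu> j) + c)"

lemma finite_boxes: "finite (boxes v)"
proof -
  have "boxes v \<subseteq> {..<length v} \<times> {..<sum_list v + 1}"
  proof
    fix x assume "x \<in> boxes v"
    then obtain i j where x: "x = (i,j)" "i < length v" "j < v!i" by (auto simp: boxes_def)
    have "v!i \<le> sum_list v" using elem_le_sum_list[OF x(2)] .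
    then show "x \<in> {..<length v} \<times> {..<sum_list v + 1}" using x by auto
  qed
  then show ?thesis by (rule finite_subset) auto
qed

lemma boxes_cons: "boxes (a#\<mu>) = (\<lambda>j. (0,j)) ` {..<a} \<union> (\<lambda>(i,j). (Suc i, j)) ` boxes \<mu>"
  by (auto simp: boxes_def image_iff nth_Cons split: nat.splits)

lemma arm_cons0: "j < a \<Longrightarrow> arm (a#\<mu>) (0,j) = a - 1 - j"
proof -
  have "{j'. (0, j') \<in> boxes (a#\<mu>) \<and> j < j'} = {Suc j..<a}"
    by (auto simp: boxes_def)
  then show "j < a \<Longrightarrow> ?thesis" by (simp add: arm_def)
qed

lemma leg_cons0: "leg (a#\<mu>) (0,j) = cnt \<mu> j"
proof -
  have "{i'. (i', j) \<in> boxes (a#\<mu>) \<and> 0 < i'} = Suc ` {k. k < length \<mu> \<and> j < \<mu>!k}"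
    by (auto simp: boxes_def image_iff gr0_conv_Suc)
  then show ?thesis by (simp add: leg_def cnt_def card_image)
qed

lemma arm_consS: "arm (a#\<mu>) (Suc i,j) = arm \<mu> (i,j)"
  by (simp add: arm_def boxes_def)

lemma leg_consS: "leg (a#\<mu>) (Suc i,j) = leg \<mu> (i,j)"
proof -
  have "{i'. (i', j) \<in> boxes (a#\<mu>) \<and> Suc i < i'} = Suc ` {i'. (i', j) \<in> boxes \<mu> \<and> i < i'}"
    by (auto simp: boxes_def image_iff Suc_less_eq2)
  then show ?thesis by (simp add: leg_def card_image)
qed

lemma Hc_cons: "Hc \<alpha> c (a#\<mu>) = rowprod \<alpha> c a \<mu> * Hc \<alpha> c \<mu>"
proof -
  have d: "(\<lambda>j. (0::nat,j)) ` {..<a} \<inter> (\<lambda>(i,j). (Suc i, j)) ` boxes \<mu> = {}" by auto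
  have i1: "inj_on (\<lambda>j. (0::nat,j)) {..<a}" by (auto simp: inj_on_def)
  have i2: "inj_on (\<lambda>(i,j). (Suc i, j)) (boxes \<mu>)" by (auto simp: inj_on_def)
  show ?thesis
    unfolding Hc_def boxes_cons
    apply (subst prod.union_disjoint)
       apply (simp_all add: finite_boxes d)
    apply (subst prod.reindex[OF i1])
    apply (subst prod.reindex[OF i2])
    apply (simp add: rowprod_def arm_cons0 leg_cons0 case_prod_beta arm_consS leg_consS)
    done
qed


lemma telescope_nat:
  fixes h :: "nat \<Rightarrow> real"
  shows "b \<le> a \<Longrightarrow> (\<Prod>j<b. h (a - j)) * h (a - b) = h a * (\<Prod>j<b. h (a - 1 - j))"
proof (induction b)
  case 0 then show ?case by simp
next
  case (Suc b)
  then have "(\<Prod>j<Suc b. h (a - j)) * h (a - Suc b) = ((\<Prod>j<b. h (a - j)) * h (a - b)) * h (a - Suc b)"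
    by (simp add: mult_ac)
  also have "\<dots> = h a * ((\<Prod>j<b. h (a - 1 - j)) * h (a - 1 - b))" using Suc by (simp add: mult_ac)
  also have "\<dots> = h a * (\<Prod>j<Suc b. h (a - 1 - j))" by simp
  finally show ?case .
qed

lemma cnt_snoc: "cnt (\<nu>@[b]) j = cnt \<nu> j + (if j < b then 1 else 0)"
proof -
  have "{k. k < length (\<nu>@[b]) \<and> j < (\<nu>@[b])!k} = {k. k < length \<nu> \<and> j < \<nu>!k} \<union> (if j < b then {length \<nu>} else {})"
    by (auto simp: nth_append less_Suc_eq)
  then show ?thesis by (simp add: cnt_def)
qed

lemma cnt_all: "\<forall>k<length \<nu>. b \<le> \<nu>!k \<Longrightarrow> j < b \<Longrightarrow> cnt \<nu> j = length \<nu>"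
proof -
  assume "\<forall>k<length \<nu>. b \<le> \<nu>!k" "j < b"
  then have "{k. k < length \<nu> \<and> j < \<nu>!k} = {..<length \<nu>}" by force
  then show ?thesis by (simp add: cnt_def)
qed

lemma prod_split_at:
  fixes g :: "nat \<Rightarrow> real"
  shows "b \<le> a \<Longrightarrow> (\<Prod>j<a. g j) = (\<Prod>j<b. g j) * (\<Prod>j\<in>{b..<a}. g j)"
  by (metis atLeast0LessThan prod.atLeastLessThan_concat zero_le)

lemma rowprod_snoc:
  assumes "\<forall>k<length \<nu>. b \<le> \<nu>!k" "b \<le> a"
  shows "rowprod \<alpha> c a (\<nu>@[b]) * (\<Prod>j<b. \<alpha> * real (a - 1 - j) + real (length \<nu>) + c)
       = rowprod \<alpha> c a \<nu> * (\<Prod>j<b. \<alpha> * real (a - 1 - j) + real (length \<nu>) + 1 + c)"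
proof -
  let ?g = "\<lambda>\<mu> j. \<alpha> * real (a - 1 - j) + real (cnt \<mu> j) + c"
  have A: "rowprod \<alpha> c a (\<nu>@[b]) = (\<Prod>j<b. \<alpha> * real (a - 1 - j) + real (length \<nu>) + 1 + c) * (\<Prod>j\<in>{b..<a}. ?g \<nu> j)"
    unfolding rowprod_def prod_split_at[OF assms(2)]
    by (simp add: cnt_snoc cnt_all[OF assms(1)] algebra_simps)
  have B: "rowprod \<alpha> c a \<nu> = (\<Prod>j<b. \<alpha> * real (a - 1 - j) + real (length \<nu>) + c) * (\<Prod>j\<in>{b..<a}. ?g \<nu> j)"
    unfolding rowprod_def prod_split_at[OF assms(2)]
    by (simp add: cnt_all[OF assms(1)])
  show ?thesis unfolding A B by (simp add: mult_ac)
qed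


lemma eq_div_helper: "x * y = z \<Longrightarrow> y > 0 \<Longrightarrow> x = z / (y::real)"
  by (simp add: eq_divide_eq)

lemma rowprod_pos: "\<alpha> > 0 \<Longrightarrow> c > 0 \<Longrightarrow> rowprod \<alpha> c a \<mu> > 0"
  unfolding rowprod_def by (intro prod_pos) (auto intro: add_nonneg_pos)

lemma rowprod_succ:
  assumes "sorted_wrt (\<ge>) \<mu>" "\<forall>k<length \<mu>. \<mu>!k \<le> a" "\<alpha> > 0" "c > 0"
  shows "rowprod \<alpha> c (Suc a) \<mu> = rowprod \<alpha> c a \<mu> * (\<alpha> * real a + real (length \<mu>) + c) *
     (\<Prod>k<length \<mu>. (\<alpha> * real (a - \<mu>!k) + real k + c) / (\<alpha> * real (a - \<mu>!k) + real k + 1 + c))"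
  using assms(1,2)
proof (induction \<mu> rule: rev_induct)
  case Nil
  have "rowprod \<alpha> c (Suc a) [] = (\<Prod>j<Suc a. \<alpha> * real (Suc a - 1 - j) + c)"
    by (simp add: rowprod_def cnt_def)
  also have "\<dots> = (\<alpha> * real a + c) * (\<Prod>j<a. \<alpha> * real (a - 1 - j) + c)"
    by (subst prod.lessThan_Suc_shift) simp
  also have "(\<Prod>j<a. \<alpha> * real (a - 1 - j) + c) = rowprod \<alpha> c a []"
    by (simp add: rowprod_def cnt_def)
  finally show ?case by simp
next
  case (snoc b \<nu>)
  let ?L = "length \<nu>"
  have sv: "sorted_wrt (\<ge>) \<nu>" using snoc.prems(1) by (simp add: sorted_wrt_append)
  have bn: "\<forall>k<?L. b \<le> \<nu>!k" using snoc.prems(1) by (auto simp: sorted_wrt_append)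
  have ba: "b \<le> a" using snoc.prems(2) by (auto simp: nth_append dest: spec[of _ ?L])
  have na: "\<forall>k<?L. \<nu>!k \<le> a"
  proof (intro allI impI)
    fix k assume "k < ?L" then show "\<nu>!k \<le> a" using snoc.prems(2) spec[OF snoc.prems(2), of k] by (simp add: nth_append)
  qed
  note IH = snoc.IH[OF sv na]
  define h where "h t = \<alpha> * real t + real ?L + c" for t
  define k where "k t = \<alpha> * real t + real ?L + 1 + c" for t
  have hp: "h t > 0" for t unfolding h_def using assms(3,4) by (intro add_nonneg_pos) auto
  have kp: "k t > 0" for t unfolding k_def using assms(3,4) by (intro add_nonneg_pos) auto
  note S0 = rowprod_snoc[OF bn ba, of \<alpha> c]
  note S1 = rowprod_snoc[OF bn le_SucI[OF ba], of \<alpha> c]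
  have X0: "(\<Prod>j<b. \<alpha> * real (a - 1 - j) + real ?L + c) = (\<Prod>j<b. h (a - 1 - j))" by (simp add: h_def)
  have Y0: "(\<Prod>j<b. \<alpha> * real (a - 1 - j) + real ?L + 1 + c) = (\<Prod>j<b. k (a - 1 - j))" by (simp add: k_def)
  have X1: "(\<Prod>j<b. \<alpha> * real (Suc a - 1 - j) + real ?L + c) = (\<Prod>j<b. h (a - j))" by (simp add: h_def)
  have Y1: "(\<Prod>j<b. \<alpha> * real (Suc a - 1 - j) + real ?L + 1 + c) = (\<Prod>j<b. k (a - j))" by (simp add: k_def)
  note Th = telescope_nat[OF ba, of h]
  note Tk = telescope_nat[OF ba, of k]
  have P0: "(\<Prod>j<b. h (a - 1 - j)) > 0" "(\<Prod>j<b. k (a - 1 - j)) > 0" "(\<Prod>j<b. h (a - j)) > 0"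
    using hp kp by (auto intro: prod_pos)
  define \<Pi> where "\<Pi> = (\<Prod>k<?L. (\<alpha> * real (a - \<nu>!k) + real k + c) / (\<alpha> * real (a - \<nu>!k) + real k + 1 + c))"
  have PiS: "(\<Prod>ka<length (\<nu>@[b]). (\<alpha> * real (a - (\<nu>@[b])!ka) + real ka + c) / (\<alpha> * real (a - (\<nu>@[b])!ka) + real ka + 1 + c))
     = \<Pi> * (h (a - b) / k (a - b))"
    by (simp add: \<Pi>_def h_def k_def nth_append)
  have R0: "rowprod \<alpha> c a (\<nu>@[b]) = rowprod \<alpha> c a \<nu> * (\<Prod>j<b. k (a - 1 - j)) / (\<Prod>j<b. h (a - 1 - j))"
    using eq_div_helper[OF S0[unfolded X0 Y0] P0(1)] by simp
  have R1: "rowprod \<alpha> c (Suc a) (\<nu>@[b]) = rowprod \<alpha> c (Suc a) \<nu> * (\<Prod>j<b. k (a - j)) / (\<Prod>j<b. h (a - j))"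
    using eq_div_helper[OF S1[unfolded X1 Y1] P0(3)] by simp
  have IH': "rowprod \<alpha> c (Suc a) \<nu> = rowprod \<alpha> c a \<nu> * h a * \<Pi>"
    using IH by (simp add: h_def \<Pi>_def)
  have e: "\<alpha> * real a + real (length (\<nu>@[b])) + c = k a" by (simp add: k_def)
  have Y1e: "(\<Prod>j<b. k (a - j)) = k a * (\<Prod>j<b. k (a - 1 - j)) / k (a - b)"
    using eq_div_helper[OF Tk kp[of "a-b"]] .
  have X1e: "(\<Prod>j<b. h (a - j)) = h a * (\<Prod>j<b. h (a - 1 - j)) / h (a - b)"
    using eq_div_helper[OF Th hp[of "a-b"]] .
  have gen: "\<And>r P ha hb ka kb X (Y::real). ha > 0 \<Longrightarrow> hb > 0 \<Longrightarrow> ka > 0 \<Longrightarrow> kb > 0 \<Longrightarrow> X > 0 \<Longrightarrow> Y > 0 \<Longrightarrow>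
     r * ha * P * (ka * Y / kb) / (ha * X / hb) = r * Y / X * ka * (P * (hb / kb))"
    by (simp add: field_simps)
  show ?case unfolding PiS R0 R1 IH' e Y1e X1e
    by (rule gen) (use hp kp P0 in auto)
qed


definition zz :: "real \<Rightarrow> nat list \<Rightarrow> nat \<Rightarrow> real" where
  "zz \<alpha> v k = \<alpha> * real (v!k) - real k"

definition rf :: "real \<Rightarrow> real \<Rightarrow> nat list \<Rightarrow> nat \<Rightarrow> nat \<Rightarrow> real" where
  "rf \<alpha> c v r k = (if k < r then (zz \<alpha> v k - zz \<alpha> v r - \<alpha> + c) / (zz \<alpha> v k - zz \<alpha> v r - \<alpha> - 1 + c)
      else if r < k then (zz \<alpha> v r - zz \<alpha> v k - 1 + c) / (zz \<alpha> v r - zz \<alpha> v k + c) else 1)"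

definition rho :: "real \<Rightarrow> real \<Rightarrow> nat list \<Rightarrow> nat \<Rightarrow> real" where
  "rho \<alpha> c v r = (zz \<alpha> v r + real (length v) - 1 + c) * (\<Prod>k<length v. rf \<alpha> c v r k)"

lemma cnt_upd: "r < length \<mu> \<Longrightarrow> cnt (\<mu>[r := Suc (\<mu>!r)]) j = cnt \<mu> j + (if j = \<mu>!r then 1 else 0)"
proof -
  assume r: "r < length \<mu>"
  have "{k. k < length \<mu> \<and> j < \<mu>[r := Suc (\<mu>!r)]!k} = {k. k < length \<mu> \<and> j < \<mu>!k} \<union> (if j = \<mu>!r then {r} else {})"
    using r by (auto simp: nth_list_update split: if_splits)
  moreover have "r \<notin> {k. k < length \<mu> \<and> j < \<mu>!k}" if "j = \<mu>!r" using that by auto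
  ultimately show ?thesis by (simp add: cnt_def)
qed

lemma cnt_at:
  assumes "sorted_wrt (\<ge>) \<mu>" "r < length \<mu>" "r = 0 \<or> \<mu>!r < \<mu>!(r-1)"
  shows "cnt \<mu> (\<mu>!r) = r"
proof -
  have "{k. k < length \<mu> \<and> \<mu>!r < \<mu>!k} = {..<r}"
  proof (intro set_eqI iffI)
    fix k assume k: "k \<in> {k. k < length \<mu> \<and> \<mu>!r < \<mu>!k}"
    show "k \<in> {..<r}"
    proof (rule ccontr)
      assume "k \<notin> {..<r}"
      then have "r \<le> k" by simp
      then have "\<mu>!k \<le> \<mu>!r" using assms(1) k
        by (metis (mono_tags, lifting) le_neq_implies_less mem_Collect_eq order.refl sorted_wrt_nth_less)
      then show False using k by simp
    qed
  next
    fix k assume k: "k \<in> {..<r}"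
    then have "r \<noteq> 0" by auto
    then have lt: "\<mu>!r < \<mu>!(r-1)" using assms(3) by simp
    have "\<mu>!(r-1) \<le> \<mu>!k" if "k < r - 1" using assms(1,2) that sorted_wrt_nth_less[OF assms(1), of k "r-1"] by auto
    then have "\<mu>!(r-1) \<le> \<mu>!k" using k by (cases "k = r - 1") auto
    then show "k \<in> {k. k < length \<mu> \<and> \<mu>!r < \<mu>!k}" using k lt assms(2) by auto
  qed
  then show ?thesis by (simp add: cnt_def)
qed

lemma rowprod_upd:
  assumes "sorted_wrt (\<ge>) \<mu>" "r < length \<mu>" "r = 0 \<or> \<mu>!r < \<mu>!(r-1)" "\<mu>!r < a"
  shows "rowprod \<alpha> c a (\<mu>[r := Suc (\<mu>!r)]) * (\<alpha> * real (a - 1 - \<mu>!r) + real r + c)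
     = rowprod \<alpha> c a \<mu> * (\<alpha> * real (a - 1 - \<mu>!r) + real r + 1 + c)"
proof -
  let ?m = "\<mu>!r"
  have m: "?m \<in> {..<a}" using assms(4) by simp
  let ?f = "\<lambda>\<mu> j. \<alpha> * real (a - 1 - j) + real (cnt \<mu> j) + c"
  have e1: "rowprod \<alpha> c a (\<mu>[r := Suc (\<mu>!r)]) = ?f (\<mu>[r := Suc (\<mu>!r)]) ?m * (\<Prod>j\<in>{..<a}-{?m}. ?f \<mu> j)"
  proof -
    have "rowprod \<alpha> c a (\<mu>[r := Suc (\<mu>!r)]) = ?f (\<mu>[r := Suc (\<mu>!r)]) ?m * (\<Prod>j\<in>{..<a}-{?m}. ?f (\<mu>[r := Suc (\<mu>!r)]) j)"
      unfolding rowprod_def by (rule prod.remove[OF _ m]) simp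
    also have "(\<Prod>j\<in>{..<a}-{?m}. ?f (\<mu>[r := Suc (\<mu>!r)]) j) = (\<Prod>j\<in>{..<a}-{?m}. ?f \<mu> j)"
      by (rule prod.cong) (auto simp: cnt_upd[OF assms(2)])
    finally show ?thesis .
  qed
  have e2: "rowprod \<alpha> c a \<mu> = ?f \<mu> ?m * (\<Prod>j\<in>{..<a}-{?m}. ?f \<mu> j)"
    unfolding rowprod_def by (rule prod.remove[OF _ m]) simp
  show ?thesis unfolding e1 e2 using cnt_upd[OF assms(2)] cnt_at[OF assms(1-3)] by (simp add: algebra_simps)
qed


lemma Hc_pos: "\<alpha> > 0 \<Longrightarrow> c > 0 \<Longrightarrow> Hc \<alpha> c v > 0"
  unfolding Hc_def by (intro prod_pos) (auto intro: add_nonneg_pos)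

lemma zz_cons_Suc: "zz \<alpha> (a#\<mu>) (Suc k) = zz \<alpha> \<mu> k - 1"
  by (simp add: zz_def)

lemma zz_cons_0: "zz \<alpha> (a#\<mu>) 0 = \<alpha> * real a"
  by (simp add: zz_def)

lemma rf_cons_Suc: "rf \<alpha> c (a#\<mu>) (Suc r) (Suc k) = rf \<alpha> c \<mu> r k"
  by (simp add: rf_def zz_cons_Suc)

lemma Hc_inc:
  assumes "sorted_wrt (\<ge>) v" "r < length v" "r = 0 \<or> v!r < v!(r-1)" "\<alpha> > 0" "c > 0"
  shows "Hc \<alpha> c (v[r := Suc (v!r)]) = Hc \<alpha> c v * rho \<alpha> c v r"
  using assms(1-3)
proof (induction v arbitrary: r)
  case Nil then show ?case by simp
next
  case (Cons a \<mu>)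
  let ?L = "length \<mu>"
  have s\<mu>: "sorted_wrt (\<ge>) \<mu>" and ma: "\<forall>k<?L. \<mu>!k \<le> a" using Cons.prems(1) by auto
  show ?case
  proof (cases r)
    case 0
    have Pi: "(\<Prod>k<?L. (\<alpha> * real (a - \<mu>!k) + real k + c) / (\<alpha> * real (a - \<mu>!k) + real k + 1 + c))
        = (\<Prod>k<?L. rf \<alpha> c (a#\<mu>) 0 (Suc k))"
    proof (rule prod.cong[OF refl])
      fix k assume "k \<in> {..<?L}"
      then have "\<mu>!k \<le> a" using ma by auto
      then show "(\<alpha> * real (a - \<mu>!k) + real k + c) / (\<alpha> * real (a - \<mu>!k) + real k + 1 + c) = rf \<alpha> c (a#\<mu>) 0 (Suc k)"
        by (simp add: rf_def zz_def of_nat_diff algebra_simps)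
    qed
    have "rho \<alpha> c (a#\<mu>) 0 = (\<alpha> * real a + real ?L + c) * (\<Prod>k<?L. rf \<alpha> c (a#\<mu>) 0 (Suc k))"
      unfolding rho_def by (simp add: prod.lessThan_Suc_shift rf_def zz_def del: prod.lessThan_Suc)
    then show ?thesis
      using 0 rowprod_succ[OF s\<mu> ma assms(4,5)] Pi by (simp add: Hc_cons mult_ac)
  next
    case (Suc r')
    have r': "r' < ?L" using Cons.prems(2) Suc by simp
    have add': "r' = 0 \<or> \<mu>!r' < \<mu>!(r'-1)" using Cons.prems(3) Suc by (cases r') auto
    have IH: "Hc \<alpha> c (\<mu>[r' := Suc (\<mu>!r')]) = Hc \<alpha> c \<mu> * rho \<alpha> c \<mu> r'"
      using Cons.IH[OF s\<mu> r' add'] .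
    have mlt: "\<mu>!r' < a"
    proof (cases r')
      case 0 then show ?thesis using Cons.prems(3) Suc by simp
    next
      case (Suc r'')
      then have "\<mu>!r' < \<mu>!r''" using add' by simp
      also have "\<mu>!r'' \<le> a" using ma r' Suc by simp
      finally show ?thesis .
    qed
    note RU = rowprod_upd[OF s\<mu> r' add' mlt, of \<alpha> c]
    define A where "A = \<alpha> * real (a - 1 - \<mu>!r') + real r' + c"
    have Ap: "A > 0" unfolding A_def using assms(4,5) by (intro add_nonneg_pos) auto
    have RU': "rowprod \<alpha> c a (\<mu>[r' := Suc (\<mu>!r')]) = rowprod \<alpha> c a \<mu> * ((A + 1) / A)"
    proof -
      have "rowprod \<alpha> c a (\<mu>[r' := Suc (\<mu>!r')]) * A = rowprod \<alpha> c a \<mu> * (A + 1)"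
        using RU by (simp add: A_def algebra_simps)
      from eq_div_helper[OF this Ap] show ?thesis by simp
    qed
    have rf0: "rf \<alpha> c (a#\<mu>) (Suc r') 0 = (A + 1) / A"
      using mlt by (simp add: rf_def zz_def A_def of_nat_diff algebra_simps)
    have "rho \<alpha> c (a#\<mu>) (Suc r') = (zz \<alpha> \<mu> r' + real ?L - 1 + c) * (rf \<alpha> c (a#\<mu>) (Suc r') 0 * (\<Prod>k<?L. rf \<alpha> c \<mu> r' k))"
      unfolding rho_def by (simp add: prod.lessThan_Suc_shift rf_cons_Suc zz_cons_Suc del: prod.lessThan_Suc)
    then have rh: "rho \<alpha> c (a#\<mu>) (Suc r') = rho \<alpha> c \<mu> r' * ((A + 1) / A)"
      unfolding rf0 rho_def by simp
    show ?thesis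
      using Suc IH RU' rh by (simp add: Hc_cons mult_ac)
  qed
qed


lemma jack_prob_Hc: "jack_prob \<alpha> n v = \<alpha> ^ n * fact n / (Hc \<alpha> 1 v * Hc \<alpha> \<alpha> v)"
  unfolding jack_prob_def Hc_def by (simp add: prod.distrib)

definition mu :: "real \<Rightarrow> nat list \<Rightarrow> nat \<Rightarrow> real" where
  "mu \<alpha> v r = (\<Prod>k\<in>{..<length v}-{r}. (zz \<alpha> v r - zz \<alpha> v k + 1) / (zz \<alpha> v r - zz \<alpha> v k)) / (zz \<alpha> v r + real (length v))"

definition dd :: "real \<Rightarrow> nat list \<Rightarrow> nat \<Rightarrow> real" where
  "dd \<alpha> v s = (zz \<alpha> v s + real (length v) - 1) * (\<Prod>k\<in>{..<length v}-{s}. (zz \<alpha> v s - zz \<alpha> v k - 1) / (zz \<alpha> v s - zz \<alpha> v k)) / (\<alpha> * real (sum_list v))"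

lemma prod_rf: "r < length v \<Longrightarrow> (\<Prod>k<length v. rf \<alpha> c v r k) = (\<Prod>k\<in>{..<length v}-{r}. rf \<alpha> c v r k)"
  by (subst prod.remove[of "{..<length v}" r]) (auto simp: rf_def)

lemma sorted_ge_above:
  assumes "sorted_wrt (\<ge>) v" "r < k" "k < length v"
  shows "v!k \<le> v!r"
  using sorted_wrt_nth_less[OF assms] by simp

lemma sorted_gt_below:
  assumes "sorted_wrt (\<ge>) v" "k < r" "r < length v" "r = 0 \<or> v!r < v!(r-1)"
  shows "Suc (v!r) \<le> v!k"
proof -
  have "v!(r-1) \<le> v!k"
    using assms by (cases "k = r - 1") (auto intro: sorted_ge_above)
  then show ?thesis using assms by auto
qed

lemma pw_below0:
  fixes w \<alpha> :: real
  assumes "w + 1 \<noteq> 0" "w + \<alpha> \<noteq> 0" "w \<noteq> 0"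
  shows "(- w - \<alpha> + 1) / (- w - \<alpha>) * ((- w) / (- w - 1)) * ((w + 1) / w) = (w + \<alpha> - 1) / (w + \<alpha>)"
proof -
  have A0: "(- w - \<alpha> + 1) / (- w - \<alpha>) = (-(w + \<alpha> - 1)) / (-(w + \<alpha>))"
    by (rule arg_cong2[where f="(/)"]) simp_all
  have A: "(- w - \<alpha> + 1) / (- w - \<alpha>) = (w + \<alpha> - 1) / (w + \<alpha>)"
    unfolding A0 by (rule minus_divide_divide)
  have B0: "(- w) / (- w - 1) = (- w) / (-(w + 1))"
    by (rule arg_cong2[where f="(/)"]) simp_all
  have B: "(- w) / (- w - 1) = w / (w + 1)"
    unfolding B0 by (rule minus_divide_divide)
  have C: "w / (w + 1) * ((w + 1) / w) = 1"
    using assms by simp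
  show ?thesis unfolding A B mult.assoc C by simp
qed

lemma pw_above0:
  fixes w \<alpha> :: real
  assumes "w + 1 \<noteq> 0" "w + \<alpha> \<noteq> 0" "w \<noteq> 0"
  shows "w / (w + 1) * ((w - 1 + \<alpha>) / (w + \<alpha>)) * ((w + 1) / w) = (w + \<alpha> - 1) / (w + \<alpha>)"
proof -
  have "w / (w + 1) * ((w + 1) / w) = 1"
    using assms by simp
  moreover have "w - 1 + \<alpha> = w + \<alpha> - 1" by simp
  ultimately show ?thesis by (metis (no_types, lifting) mult.commute mult.left_commute mult_1)
qed

lemma pw_below:
  fixes zr zk \<alpha> :: real
  assumes "zr - zk + 1 \<noteq> 0" "zr - zk + \<alpha> \<noteq> 0" "zr - zk \<noteq> 0"
  shows "(zk - zr - \<alpha> + 1) / (zk - zr - \<alpha> - 1 + 1) * ((zk - zr - \<alpha> + \<alpha>) / (zk - zr - \<alpha> - 1 + \<alpha>))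
          * ((zr - zk + 1) / (zr - zk)) = ((zr + \<alpha>) - zk - 1) / ((zr + \<alpha>) - zk)"
proof -
  have e1: "(zk - zr - \<alpha> + 1) / (zk - zr - \<alpha> - 1 + 1) = (- (zr - zk) - \<alpha> + 1) / (- (zr - zk) - \<alpha>)"
    by (rule arg_cong2[where f="(/)"]) simp_all
  have e2: "(zk - zr - \<alpha> + \<alpha>) / (zk - zr - \<alpha> - 1 + \<alpha>) = (- (zr - zk)) / (- (zr - zk) - 1)"
    by (rule arg_cong2[where f="(/)"]) simp_all
  have e3: "((zr + \<alpha>) - zk - 1) / ((zr + \<alpha>) - zk) = ((zr - zk) + \<alpha> - 1) / ((zr - zk) + \<alpha>)"
    by (rule arg_cong2[where f="(/)"]) simp_all
  show ?thesis unfolding e1 e2 e3 by (rule pw_below0[OF assms])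
qed

lemma pw_above:
  fixes zr zk \<alpha> :: real
  assumes "zr - zk + 1 \<noteq> 0" "zr - zk + \<alpha> \<noteq> 0" "zr - zk \<noteq> 0"
  shows "(zr - zk - 1 + 1) / (zr - zk + 1) * ((zr - zk - 1 + \<alpha>) / (zr - zk + \<alpha>))
          * ((zr - zk + 1) / (zr - zk)) = ((zr + \<alpha>) - zk - 1) / ((zr + \<alpha>) - zk)"
proof -
  have e1: "(zr - zk - 1 + 1) / (zr - zk + 1) = (zr - zk) / (zr - zk + 1)"
    by simp
  have e3: "((zr + \<alpha>) - zk - 1) / ((zr + \<alpha>) - zk) = ((zr - zk) + \<alpha> - 1) / ((zr - zk) + \<alpha>)"
    by (rule arg_cong2[where f="(/)"]) simp_all
  show ?thesis unfolding e1 e3 by (rule pw_above0[OF assms])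
qed

lemma zz_upd_same: "r < length v \<Longrightarrow> zz \<alpha> (v[r := Suc (v!r)]) r = zz \<alpha> v r + \<alpha>"
  by (simp add: zz_def algebra_simps)

lemma zz_upd_other: "k \<noteq> r \<Longrightarrow> zz \<alpha> (v[r := x]) k = zz \<alpha> v k"
  by (simp add: zz_def)

lemma trans_B:
  assumes sv: "sorted_wrt (\<ge>) v" and r: "r < length v" and ad: "r = 0 \<or> v!r < v!(r-1)" and a: "\<alpha> > 0"
  shows "jack_prob \<alpha> (Suc (sum_list v)) (v[r := Suc (v!r)]) * dd \<alpha> (v[r := Suc (v!r)]) r
       = jack_prob \<alpha> (sum_list v) v * mu \<alpha> v r"
proof -
  define v' where "v' = v[r := Suc (v!r)]"
  define N where "N = length v"
  define n where "n = sum_list v"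
  define K where "K = {..<N} - {r}"
  define z where "z = zz \<alpha> v r"
  have lv': "length v' = N" by (simp add: v'_def N_def)
  have sv': "sum_list v' = Suc n" using r by (simp add: v'_def n_def sum_list_update)
  have H1: "Hc \<alpha> 1 v' = Hc \<alpha> 1 v * rho \<alpha> 1 v r" unfolding v'_def by (rule Hc_inc[OF sv r ad a]) simp
  have Ha: "Hc \<alpha> \<alpha> v' = Hc \<alpha> \<alpha> v * rho \<alpha> \<alpha> v r" unfolding v'_def by (rule Hc_inc[OF sv r ad a a])
  define P1 where "P1 = (\<Prod>k\<in>K. rf \<alpha> 1 v r k)"
  define Pa where "Pa = (\<Prod>k\<in>K. rf \<alpha> \<alpha> v r k)"
  define P2 where "P2 = (\<Prod>k\<in>K. (z - zz \<alpha> v k + 1) / (z - zz \<alpha> v k))"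
  define P3 where "P3 = (\<Prod>k\<in>K. ((z + \<alpha>) - zz \<alpha> v k - 1) / ((z + \<alpha>) - zz \<alpha> v k))"
  have rho1: "rho \<alpha> 1 v r = (z + N) * P1"
    unfolding rho_def P1_def K_def N_def z_def prod_rf[OF r] by simp
  have rhoa: "rho \<alpha> \<alpha> v r = (z + N - 1 + \<alpha>) * Pa"
    unfolding rho_def Pa_def K_def N_def z_def prod_rf[OF r] by simp
  have mu: "mu \<alpha> v r = P2 / (z + N)" unfolding mu_def P2_def K_def N_def z_def by simp
  have dd: "dd \<alpha> v' r = (z + \<alpha> + N - 1) * P3 / (\<alpha> * real (Suc n))"
  proof -
    have "(\<Prod>k\<in>{..<length v'} - {r}. (zz \<alpha> v' r - zz \<alpha> v' k - 1) / (zz \<alpha> v' r - zz \<alpha> v' k)) = P3"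
      unfolding P3_def K_def lv' z_def
      by (rule prod.cong) (auto simp: v'_def zz_upd_same[OF r] zz_upd_other)
    then show ?thesis unfolding dd_def sv' lv' using zz_upd_same[OF r, of \<alpha>] by (simp add: v'_def z_def)
  qed
  have pw: "rf \<alpha> 1 v r k * rf \<alpha> \<alpha> v r k * ((z - zz \<alpha> v k + 1) / (z - zz \<alpha> v k))
      = ((z + \<alpha>) - zz \<alpha> v k - 1) / ((z + \<alpha>) - zz \<alpha> v k)" if k: "k \<in> K" for k
  proof -
    have kN: "k < N" "k \<noteq> r" using k by (auto simp: K_def)
    show ?thesis
    proof (cases "k < r")
      case True
      have le: "Suc (v!r) \<le> v!k" using sorted_gt_below[OF sv True r ad] .
      have "\<alpha> * real (Suc (v!r)) \<le> \<alpha> * real (v!k)" using le a by (intro mult_left_mono) auto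
      then have w: "z - zz \<alpha> v k \<le> - \<alpha> - 1" using True unfolding z_def zz_def by (simp add: algebra_simps)
      have "z - zz \<alpha> v k + 1 \<noteq> 0" "z - zz \<alpha> v k + \<alpha> \<noteq> 0" "z - zz \<alpha> v k \<noteq> 0" using w a by linarith+
      from pw_below[OF this] show ?thesis using True unfolding rf_def z_def by simp
    next
      case False
      then have gt: "r < k" using kN by simp
      have le: "v!k \<le> v!r" using sorted_ge_above[OF sv gt] kN unfolding N_def by simp
      have "\<alpha> * real (v!k) \<le> \<alpha> * real (v!r)" using le a by (intro mult_left_mono) auto
      then have w: "z - zz \<alpha> v k \<ge> 1" using gt unfolding z_def zz_def by (simp add: algebra_simps)
      have "z - zz \<alpha> v k + 1 \<noteq> 0" "z - zz \<alpha> v k + \<alpha> \<noteq> 0" "z - zz \<alpha> v k \<noteq> 0" using w a by linarith+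
      from pw_above[OF this] show ?thesis using False gt unfolding rf_def z_def by simp
    qed
  qed
  have P3e: "P3 = P1 * Pa * P2"
    unfolding P1_def Pa_def P2_def P3_def prod.distrib[symmetric] by (rule prod.cong[OF refl]) (rule pw[symmetric])
  have zN: "z + N > 0" "z + N - 1 + \<alpha> > 0"
  proof -
    have "\<alpha> * real (v!r) \<ge> 0" using a by simp
    moreover have "real r + 1 \<le> real N" using r unfolding N_def by simp
    ultimately show "z + N > 0" "z + N - 1 + \<alpha> > 0" using a unfolding z_def zz_def by linarith+
  qed
  have Hp: "Hc \<alpha> 1 v > 0" "Hc \<alpha> \<alpha> v > 0" "Hc \<alpha> 1 v' > 0" "Hc \<alpha> \<alpha> v' > 0" using a by (auto intro: Hc_pos)
  have P1n: "P1 \<noteq> 0" using Hp H1 rho1 by auto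
  have Pan: "Pa \<noteq> 0" using Hp Ha rhoa by auto
  have gen: "\<And>(A::real) H1 Ha z1 za P1 Pa P2 m F. A > 0 \<Longrightarrow> H1 > 0 \<Longrightarrow> Ha > 0 \<Longrightarrow> z1 > 0 \<Longrightarrow> za > 0 \<Longrightarrow> P1 \<noteq> 0 \<Longrightarrow> Pa \<noteq> 0
     \<Longrightarrow> m > 0 \<Longrightarrow> A * A ^ n * (m * F) / (H1 * (z1 * P1) * (Ha * (za * Pa))) * (za * (P1 * Pa * P2) / (A * m))
       = A ^ n * F / (H1 * Ha) * (P2 / z1)"
    by (simp add: field_simps)
  have zaeq: "z + \<alpha> + N - 1 = z + N - 1 + \<alpha>" by simp
  show ?thesis
    unfolding v'_def[symmetric] n_def[symmetric] jack_prob_Hc H1 Ha rho1 rhoa mu dd P3e zaeq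
    by (simp only: power_Suc fact_Suc of_nat_mult) (rule gen; use a Hp zN P1n Pan in simp)
qed




lemma zz_strict:
  assumes "sorted_wrt (\<ge>) v" "k < r" "r < length v" "\<alpha> > 0"
  shows "zz \<alpha> v r < zz \<alpha> v k"
proof -
  have "v!r \<le> v!k" using sorted_ge_above[OF assms(1-3)] .
  then have "\<alpha> * real (v!r) \<le> \<alpha> * real (v!k)" using assms(4) by (intro mult_left_mono) auto
  then show ?thesis using assms(2) unfolding zz_def by simp
qed

lemma zz_inj:
  assumes "sorted_wrt (\<ge>) v" "\<alpha> > 0"
  shows "inj_on (zz \<alpha> v) {..<length v}"
proof (rule inj_onI)
  fix k r assume "k \<in> {..<length v}" "r \<in> {..<length v}" "zz \<alpha> v k = zz \<alpha> v r"
  then show "k = r" using zz_strict[OF assms(1) _ _ assms(2), of k r] zz_strict[OF assms(1) _ _ assms(2), of r k]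
    by (cases k r rule: linorder_cases) auto
qed

lemma sum_real_lessThan: "(\<Sum>k<N. real k) = real N * (real N - 1) / 2"
  by (induction N) (auto simp: field_simps)

lemma prod_div_K: "(\<Prod>k\<in>K. (f k :: real) / g k) = (\<Prod>k\<in>K. f k) / (\<Prod>k\<in>K. g k)"
  by (rule prod_dividef)

lemma prod_full_K:
  assumes "r < (N::nat)" "f r = (1::real)"
  shows "(\<Prod>k\<in>{..<N}-{r}. f k) = (\<Prod>k<N. f k)"
proof -
  have "prod f {..<N} = f r * prod f ({..<N}-{r})" by (rule prod.remove) (use assms in auto)
  then show ?thesis using assms by simp
qed

lemma mu_poly:
  assumes sv: "sorted_wrt (\<ge>) v" and a: "\<alpha> > 0" and N: "length v = Suc N'" and last: "v!N' = 0" and r: "r < length v"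
  shows "mu \<alpha> v r = poly (lp (\<lambda>k. zz \<alpha> v k - 1) {..<N'}) (zz \<alpha> v r) / (\<Prod>k\<in>{..<length v}-{r}. zz \<alpha> v r - zz \<alpha> v k)"
proof -
  let ?z = "zz \<alpha> v"
  have zN: "?z N' = - real N'" using last by (simp add: zz_def)
  have pos: "?z r + real (length v) > 0"
  proof -
    have "\<alpha> * real (v!r) \<ge> 0" using a by simp
    then show ?thesis using r unfolding zz_def by linarith
  qed
  have "(\<Prod>k\<in>{..<length v}-{r}. ?z r - ?z k + 1) = (\<Prod>k<length v. ?z r - ?z k + 1)"
    by (rule prod_full_K[OF r]) simp
  also have "\<dots> = poly (lp (\<lambda>k. ?z k - 1) {..<N'}) (?z r) * (?z r + real (length v))"
    unfolding N prod.lessThan_Suc poly_lp zN by (simp add: algebra_simps)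
  finally have e: "(\<Prod>k\<in>{..<length v}-{r}. ?z r - ?z k + 1) = poly (lp (\<lambda>k. ?z k - 1) {..<N'}) (?z r) * (?z r + real (length v))" .
  show ?thesis unfolding mu_def prod_div_K e using pos by simp
qed

lemma mu_sum:
  assumes sv: "sorted_wrt (\<ge>) v" and a: "\<alpha> > 0" and N: "length v = Suc (Suc p)" and last: "v!(Suc p) = 0"
  shows "(\<Sum>r<length v. mu \<alpha> v r) = 1" and "(\<Sum>r<length v. mu \<alpha> v r * zz \<alpha> v r) = 0"
proof -
  let ?z = "zz \<alpha> v"
  let ?T = "lp (\<lambda>k. ?z k - 1) {..<Suc p}"
  have inj: "inj_on ?z {..<length v}" by (rule zz_inj[OF sv a])
  have mp: "mu \<alpha> v r = poly ?T (?z r) / (\<Prod>k\<in>{..<length v}-{r}. ?z r - ?z k)" if "r < length v" for r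
    by (rule mu_poly[OF sv a N last that])
  have dT: "degree ?T = Suc p" by (simp add: degree_lp)
  have "(\<Sum>r<length v. mu \<alpha> v r) = (\<Sum>r<length v. poly ?T (?z r) / (\<Prod>k\<in>{..<length v}-{r}. ?z r - ?z k))"
    using mp by simp
  also have "\<dots> = coeff ?T (length v - 1)"
    by (rule lagrange1[OF inj]) (use N dT in auto)
  also have "\<dots> = 1" using N coeff_lp_top by simp
  finally show "(\<Sum>r<length v. mu \<alpha> v r) = 1" .
  let ?T2 = "pCons 0 ?T"
  have "(\<Sum>r<length v. mu \<alpha> v r * ?z r) = (\<Sum>r<length v. poly ?T2 (?z r) / (\<Prod>k\<in>{..<length v}-{r}. ?z r - ?z k))"
    using mp by (simp add: mult.commute)
  also have "\<dots> = coeff ?T2 (length v - 1) + coeff ?T2 (length v) * (\<Sum>k<length v. ?z k)"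
    by (rule lagrange2[OF inj]) (use N dT in auto)
  also have "\<dots> = - (\<Sum>k<Suc p. ?z k - 1) + (\<Sum>k<Suc (Suc p). ?z k)"
    unfolding N by (simp add: coeff_lp_1 coeff_lp_top)
  also have "\<dots> = 0"
    using last by (simp add: sum_subtractf zz_def)
  finally show "(\<Sum>r<length v. mu \<alpha> v r * zz \<alpha> v r) = 0" .
qed


lemma dd_sum:
  assumes sv: "sorted_wrt (\<ge>) w" and a: "\<alpha> > 0" and N: "length w = Suc (Suc p)" and last: "w!(Suc p) = 0"
    and m: "sum_list w > 0"
  shows "(\<Sum>s<length w. dd \<alpha> w s) = 1"
proof -
  let ?Z = "zz \<alpha> w"
  define NN where "NN = Suc (Suc p)"
  define c where "c = real NN - 1"
  define E where "E = lp (\<lambda>k. ?Z k + 1) {..<NN}"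
  define D where "D = lp ?Z {..<NN}"
  define R where "R = E - D"
  define T3 where "T3 = - (R * [:c, 1:])"
  have inj: "inj_on ?Z {..<NN}" using zz_inj[OF sv a] N unfolding NN_def by simp
  have val: "(?Z s + real NN - 1) * (\<Prod>k\<in>{..<NN}-{s}. ?Z s - ?Z k - 1) = poly T3 (?Z s)" if s: "s < NN" for s
  proof -
    have "(\<Prod>k<NN. ?Z s - ?Z k - 1) = (?Z s - ?Z s - 1) * (\<Prod>k\<in>{..<NN}-{s}. ?Z s - ?Z k - 1)"
      by (rule prod.remove) (use s in auto)
    then have e1: "(\<Prod>k\<in>{..<NN}-{s}. ?Z s - ?Z k - 1) = - poly E (?Z s)"
      unfolding E_def poly_lp by (simp add: algebra_simps)
    have "poly D (?Z s) = 0" unfolding D_def poly_lp using s by (intro prod_zero) auto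
    then show ?thesis unfolding e1 T3_def R_def c_def by (simp add: algebra_simps)
  qed
  have dd: "dd \<alpha> w s = poly T3 (?Z s) / (\<Prod>k\<in>{..<NN}-{s}. ?Z s - ?Z k) / (\<alpha> * real (sum_list w))" if s: "s < NN" for s
    unfolding dd_def prod_div_K N NN_def[symmetric] val[OF s, symmetric] by simp
  have dE: "degree E = NN" "degree D = NN" unfolding E_def D_def by (simp_all add: degree_lp)
  have cR: "coeff R NN = 0" unfolding R_def E_def D_def by (simp add: coeff_lp_top)
  have dR: "degree R < NN"
    by (rule degree_less_if[OF _ cR]) (use degree_diff_le_max[of E D] dE in \<open>auto simp: R_def NN_def\<close>)
  have dT3: "degree T3 \<le> NN"
  proof -
    have "degree (R * [:c, 1:]) \<le> degree R + degree [:c, 1:]" by (rule degree_mult_le)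
    also have "\<dots> \<le> NN" using dR by simp
    finally show ?thesis unfolding T3_def degree_minus .
  qed
  have cR1: "coeff R (Suc p) = - real NN"
    unfolding R_def E_def D_def NN_def coeff_diff coeff_lp_1 by (simp add: sum.distrib)
  have sZ: "(\<Sum>k<NN. ?Z k) = \<alpha> * real (sum_list w) - real NN * (real NN - 1) / 2"
  proof -
    have "(\<Sum>k<NN. real (w!k)) = real (sum_list w)"
      unfolding sum_list_sum_nth N NN_def atLeast0LessThan by simp
    then show ?thesis unfolding zz_def sum_subtractf sum_real_lessThan sum_distrib_left[symmetric] by simp
  qed
  define S where "S = (\<Sum>k<NN. ?Z k)"
  have cR2: "coeff R p = (real NN - 1) * (\<Sum>k<NN. ?Z k) + real NN * (real NN - 1) / 2"
    unfolding R_def E_def D_def NN_def coeff_diff coeff_lp_2 using e2_shift[of ?Z "Suc (Suc p)"] by simp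
  have cT3N: "coeff T3 NN = real NN"
    unfolding T3_def NN_def coeff_minus coeff_mul_lin using cR cR1 unfolding NN_def by simp
  have cT3N1: "coeff T3 (Suc p) = - (c * (- real NN) + ((real NN - 1) * (\<Sum>k<NN. ?Z k) + real NN * (real NN - 1) / 2))"
    unfolding T3_def coeff_minus coeff_mul_lin cR1 cR2 by simp
  have "(\<Sum>s<NN. poly T3 (?Z s) / (\<Prod>k\<in>{..<NN}-{s}. ?Z s - ?Z k)) = coeff T3 (NN - 1) + coeff T3 NN * (\<Sum>k<NN. ?Z k)"
    by (rule lagrange2[OF inj _ dT3]) (simp add: NN_def)
  also have "\<dots> = - (c * (- real NN) + ((real NN - 1) * S + real NN * (real NN - 1) / 2)) + real NN * S"
    unfolding cT3N S_def[symmetric] using cT3N1[folded S_def] by (simp add: NN_def)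
  also have "\<dots> = S + real NN * (real NN - 1) / 2" unfolding c_def by (simp add: field_simps)
  also have "\<dots> = \<alpha> * real (sum_list w)" using sZ[folded S_def] by simp
  finally have S: "(\<Sum>s<NN. poly T3 (?Z s) / (\<Prod>k\<in>{..<NN}-{s}. ?Z s - ?Z k)) = \<alpha> * real (sum_list w)" .
  have "(\<Sum>s<length w. dd \<alpha> w s) = (\<Sum>s<NN. poly T3 (?Z s) / (\<Prod>k\<in>{..<NN}-{s}. ?Z s - ?Z k)) / (\<alpha> * real (sum_list w))"
    unfolding N NN_def[symmetric] sum_divide_distrib using dd by simp
  also have "\<dots> = 1" unfolding S using a m by (simp del: sum_list_eq_0_iff)
  finally show ?thesis .
qed





lemma transp_ge: "transp ((\<ge>) :: nat \<Rightarrow> nat \<Rightarrow> bool)"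
  by (auto simp: transp_def)

lemma sorted_adj: "sorted_wrt (\<ge>) (v::nat list) \<longleftrightarrow> (\<forall>i. Suc i < length v \<longrightarrow> v!(Suc i) \<le> v!i)"
  using sorted_wrt_iff_nth_Suc_transp[OF transp_ge] by simp

lemma sorted_inc:
  assumes "sorted_wrt (\<ge>) v" "r < length v" "r = 0 \<or> v!r < v!(r-1)"
  shows "sorted_wrt (\<ge>) (v[r := Suc (v!r)])"
  unfolding sorted_adj
proof (intro allI impI)
  fix i assume i: "Suc i < length (v[r := Suc (v!r)])"
  have adj: "v!(Suc i) \<le> v!i" using assms(1) i unfolding sorted_adj by simp
  show "v[r := Suc (v!r)]!(Suc i) \<le> v[r := Suc (v!r)]!i"
  proof (cases "Suc i = r")
    case True then show ?thesis using assms(3) i by (auto simp: nth_list_update)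
  next
    case False then show ?thesis using adj i assms(2) by (cases "i = r") (auto simp: nth_list_update)
  qed
qed

lemma sorted_dec:
  assumes "sorted_wrt (\<ge>) (w::nat list)" "Suc s < length w" "w!(Suc s) < w!s"
  shows "sorted_wrt (\<ge>) (w[s := w!s - 1])"
  unfolding sorted_adj
proof (intro allI impI)
  fix i assume i: "Suc i < length (w[s := w!s - 1])"
  have adj: "w!(Suc i) \<le> w!i" using assms(1) i unfolding sorted_adj by simp
  show "w[s := w!s - 1]!(Suc i) \<le> w[s := w!s - 1]!i"
  proof (cases "i = s")
    case True then show ?thesis using assms(3) i by (auto simp: nth_list_update)
  next
    case False then show ?thesis using adj i by (cases "Suc i = s") (auto simp: nth_list_update)
  qed
qed

lemma last_zero:
  assumes "sorted_wrt (\<ge>) w" "length w = Suc p" "sum_list w < Suc p"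
  shows "w!p = 0"
proof (rule ccontr)
  assume "w!p \<noteq> 0"
  then have "\<forall>k<length w. 1 \<le> w!k"
    using assms(1,2) by (metis One_nat_def Suc_leI less_Suc_eq neq0_conv order.trans sorted_ge_above)
  then have "(\<Sum>k<length w. (1::nat)) \<le> (\<Sum>k<length w. w!k)" by (intro sum_mono) auto
  also have "\<dots> = sum_list w" unfolding sum_list_sum_nth atLeast0LessThan ..
  finally show False using assms(2,3) by simp
qed

definition SV :: "nat \<Rightarrow> nat \<Rightarrow> nat list set" where
  "SV N n = {v. length v = N \<and> sorted_wrt (\<ge>) v \<and> sum_list v = n}"

lemma finite_SV: "finite (SV N n)"
proof -
  have "SV N n \<subseteq> {v. set v \<subseteq> {..n} \<and> length v = N}"
    unfolding SV_def by (auto simp: member_le_sum_list)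
  then show ?thesis by (rule finite_subset) (intro finite_lists_length_eq, simp)
qed

definition PP :: "real \<Rightarrow> real \<Rightarrow> nat list \<Rightarrow> real" where
  "PP \<alpha> u v = (\<Prod>x\<in>boxes v. u + content \<alpha> x)"

lemma boxes_inc: "r < length v \<Longrightarrow> boxes (v[r := Suc (v!r)]) = insert (r, v!r) (boxes v)"
  by (auto simp: boxes_def nth_list_update less_Suc_eq split: if_splits)

lemma PP_inc: "r < length v \<Longrightarrow> PP \<alpha> u (v[r := Suc (v!r)]) = PP \<alpha> u v * (u + zz \<alpha> v r)"
proof -
  assume r: "r < length v"
  have "(r, v!r) \<notin> boxes v" by (simp add: boxes_def)
  then show ?thesis unfolding PP_def boxes_inc[OF r] using finite_boxes
    by (simp add: Defs.content_def zz_def mult.commute)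
qed


lemma prod_zero_at: "k \<in> K \<Longrightarrow> finite K \<Longrightarrow> f k = (0::real) \<Longrightarrow> (\<Prod>j\<in>K. f j) = 0"
  by (rule prod_zero) auto

lemma dd_zero:
  assumes sv: "sorted_wrt (\<ge>) w" and N: "length w = Suc p" and last: "w!p = 0" and s: "s < length w"
    and nr: "\<not> (Suc s < length w \<and> w!(Suc s) < w!s)"
  shows "dd \<alpha> w s = 0"
proof (cases "Suc s < length w")
  case True
  then have "w!(Suc s) \<le> w!s" using sorted_ge_above[OF sv _ True] by simp
  then have eq: "w!(Suc s) = w!s" using nr True by simp
  have "(\<Prod>k\<in>{..<length w}-{s}. (zz \<alpha> w s - zz \<alpha> w k - 1) / (zz \<alpha> w s - zz \<alpha> w k)) = 0"
    by (rule prod_zero_at[of "Suc s"]) (use True eq in \<open>auto simp: zz_def\<close>)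
  then show ?thesis unfolding dd_def by simp
next
  case False
  then have "s = p" using s N by simp
  then have "zz \<alpha> w s + real (length w) - 1 = 0" using last N by (simp add: zz_def)
  then show ?thesis unfolding dd_def by simp
qed

lemma mu_zero:
  assumes sv: "sorted_wrt (\<ge>) v" and r: "r < length v" and na: "\<not> (r = 0 \<or> v!r < v!(r-1))"
  shows "mu \<alpha> v r = 0"
proof -
  have r0: "r \<noteq> 0" and ge: "v!(r-1) \<le> v!r" using na by auto
  have "v!r \<le> v!(r-1)" using sorted_ge_above[OF sv _ r, of "r-1"] r0 by simp
  then have eq: "v!(r-1) = v!r" using ge by simp
  have "(\<Prod>k\<in>{..<length v}-{r}. (zz \<alpha> v r - zz \<alpha> v k + 1) / (zz \<alpha> v r - zz \<alpha> v k)) = 0"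
    by (rule prod_zero_at[of "r - 1"]) (use r r0 eq in \<open>auto simp: zz_def of_nat_diff\<close>)
  then show ?thesis unfolding mu_def by simp
qed


lemma step:
  assumes a: "\<alpha> > 0" and NN: "N = Suc (Suc n)"
  shows "(\<Sum>w\<in>SV N (Suc n). jack_prob \<alpha> (Suc n) w * PP \<alpha> u w) = u * (\<Sum>v\<in>SV N n. jack_prob \<alpha> n v * PP \<alpha> u v)"
proof -
  define Rem where "Rem w = {s. Suc s < N \<and> w!(Suc s) < w!s}" for w :: "nat list"
  define Add where "Add v = {r. r < N \<and> (r = 0 \<or> v!r < v!(r-1))}" for v :: "nat list"
  define F where "F ws = jack_prob \<alpha> (Suc n) (fst ws) * dd \<alpha> (fst ws) (snd ws) * PP \<alpha> u (fst ws)" for ws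
  have finR: "finite (Rem w)" for w unfolding Rem_def by (rule finite_subset[of _ "{..<N}"]) auto
  have finA: "finite (Add v)" for v unfolding Add_def by auto
  have lastz: "w!(Suc n) = 0" if "w \<in> SV N m" "m \<le> Suc n" for w m
    by (rule last_zero[of w "Suc n"]) (use that NN in \<open>auto simp: SV_def\<close>)
  have S1: "jack_prob \<alpha> (Suc n) w * PP \<alpha> u w = (\<Sum>s\<in>Rem w. F (w, s))" if w: "w \<in> SV N (Suc n)" for w
  proof -
    have sv: "sorted_wrt (\<ge>) w" and lw: "length w = Suc (Suc n)" and sw: "sum_list w = Suc n"
      using w NN by (auto simp: SV_def)
    have "(\<Sum>s<length w. dd \<alpha> w s) = 1" by (rule dd_sum[OF sv a lw lastz[OF w order.refl]]) (simp add: sw)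
    moreover have "(\<Sum>s<length w. dd \<alpha> w s) = (\<Sum>s\<in>Rem w. dd \<alpha> w s)"
    proof (rule sum.mono_neutral_right)
      show "Rem w \<subseteq> {..<length w}" using lw NN unfolding Rem_def by auto
      show "\<forall>s\<in>{..<length w} - Rem w. dd \<alpha> w s = 0"
        using dd_zero[OF sv lw lastz[OF w order.refl]] lw NN unfolding Rem_def by auto
    qed simp
    ultimately have "(\<Sum>s\<in>Rem w. dd \<alpha> w s) = 1" by simp
    then show ?thesis unfolding F_def by (simp add: sum_distrib_left[symmetric] sum_distrib_right[symmetric] mult_ac)
  qed
  have "(\<Sum>w\<in>SV N (Suc n). jack_prob \<alpha> (Suc n) w * PP \<alpha> u w) = (\<Sum>w\<in>SV N (Suc n). \<Sum>s\<in>Rem w. F (w, s))"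
    using S1 by simp
  also have "\<dots> = (\<Sum>(w, s)\<in>Sigma (SV N (Suc n)) Rem. F (w, s))"
    by (rule sum.Sigma[OF finite_SV]) (simp add: finR)
  also have "\<dots> = (\<Sum>ws\<in>Sigma (SV N (Suc n)) Rem. F ws)"
    by (simp add: case_prod_eta)
  also have "\<dots> = (\<Sum>vr\<in>Sigma (SV N n) Add. F ((fst vr)[snd vr := Suc (fst vr ! snd vr)], snd vr))"
  proof (rule sum.reindex_bij_witness[where i = "\<lambda>(v, r). (v[r := Suc (v!r)], r)" and j = "\<lambda>(w, s). (w[s := w!s - 1], s)"])
    fix ws assume ws: "ws \<in> Sigma (SV N (Suc n)) Rem"
    obtain w s where e: "ws = (w, s)" by (cases ws)
    have w: "w \<in> SV N (Suc n)" and s: "Suc s < N" "w!(Suc s) < w!s" using ws e by (auto simp: Rem_def)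
    have lw: "length w = N" "sorted_wrt (\<ge>) w" "sum_list w = Suc n" using w by (auto simp: SV_def)
    have pos: "w!s > 0" using s by simp
    show "(\<lambda>(v, r). (v[r := Suc (v!r)], r)) ((\<lambda>(w, s). (w[s := w!s - 1], s)) ws) = ws"
      using e pos s lw by auto
    have sd: "sorted_wrt (\<ge>) (w[s := w!s - 1])" by (rule sorted_dec) (use lw s in auto)
    have sumd: "sum_list (w[s := w!s - 1]) = n" using lw s pos by (simp add: sum_list_update)
    have adds: "s = 0 \<or> w[s := w!s - 1]!s < w[s := w!s - 1]!(s-1)"
    proof (cases s)
      case 0 then show ?thesis by simp
    next
      case (Suc s')
      have "w!s \<le> w!s'" using sorted_ge_above[OF lw(2), of s' s] Suc s lw by simp
      then show ?thesis using Suc pos s lw by auto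
    qed
    show "(\<lambda>(w, s). (w[s := w!s - 1], s)) ws \<in> Sigma (SV N n) Add"
      using e sd sumd adds s lw by (auto simp: SV_def Add_def)
  next
    fix vr assume vr: "vr \<in> Sigma (SV N n) Add"
    obtain v r where e: "vr = (v, r)" by (cases vr)
    have v: "v \<in> SV N n" and r: "r < N" "r = 0 \<or> v!r < v!(r-1)" using vr e by (auto simp: Add_def)
    have lv: "length v = N" "sorted_wrt (\<ge>) v" "sum_list v = n" using v by (auto simp: SV_def)
    show "(\<lambda>(w, s). (w[s := w!s - 1], s)) ((\<lambda>(v, r). (v[r := Suc (v!r)], r)) vr) = vr"
      using e r lv by auto
    have si: "sorted_wrt (\<ge>) (v[r := Suc (v!r)])" by (rule sorted_inc) (use lv r in auto)
    have sumi: "sum_list (v[r := Suc (v!r)]) = Suc n" using lv r by (simp add: sum_list_update)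
    have vi: "v[r := Suc (v!r)] \<in> SV N (Suc n)" using si sumi lv by (simp add: SV_def)
    have "v[r := Suc (v!r)]!(Suc n) = 0" by (rule lastz[OF vi order.refl])
    then have rN: "Suc r < N" using r NN lv by (cases "r = Suc n") auto
    have "v!(Suc r) \<le> v!r" using sorted_ge_above[OF lv(2) _ ] rN lv by simp
    then have "v[r := Suc (v!r)]!(Suc r) < v[r := Suc (v!r)]!r" using rN lv by simp
    then show "(\<lambda>(v, r). (v[r := Suc (v!r)], r)) vr \<in> Sigma (SV N (Suc n)) Rem"
      using e vi rN by (auto simp: Rem_def)
  next
    fix ws assume ws: "ws \<in> Sigma (SV N (Suc n)) Rem"
    obtain w s where e: "ws = (w, s)" by (cases ws)
    have s: "Suc s < N" "w!(Suc s) < w!s" using ws e by (auto simp: Rem_def)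
    have lw: "length w = N" using ws e by (auto simp: SV_def)
    have "(w[s := w!s - 1])[s := Suc ((w[s := w!s - 1])!s)] = w" using s lw by auto
    then show "(\<lambda>vr. F ((fst vr)[snd vr := Suc (fst vr ! snd vr)], snd vr)) ((\<lambda>(w, s). (w[s := w!s - 1], s)) ws) = F ws"
      using e by simp
  qed
  also have "\<dots> = (\<Sum>v\<in>SV N n. \<Sum>r\<in>Add v. jack_prob \<alpha> n v * PP \<alpha> u v * (mu \<alpha> v r * (u + zz \<alpha> v r)))"
  proof -
    have "(\<Sum>vr\<in>Sigma (SV N n) Add. F ((fst vr)[snd vr := Suc (fst vr ! snd vr)], snd vr))
        = (\<Sum>v\<in>SV N n. \<Sum>r\<in>Add v. F (v[r := Suc (v!r)], r))"
    proof -
      have "(\<Sum>v\<in>SV N n. \<Sum>r\<in>Add v. F (v[r := Suc (v!r)], r)) = (\<Sum>(v, r)\<in>Sigma (SV N n) Add. F (v[r := Suc (v!r)], r))"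
        by (rule sum.Sigma[OF finite_SV]) (simp add: finA)
      then show ?thesis by (simp add: case_prod_beta)
    qed
    also have "\<dots> = (\<Sum>v\<in>SV N n. \<Sum>r\<in>Add v. jack_prob \<alpha> n v * PP \<alpha> u v * (mu \<alpha> v r * (u + zz \<alpha> v r)))"
    proof (intro sum.cong refl)
      fix v r assume v: "v \<in> SV N n" and r: "r \<in> Add v"
      have lv: "length v = N" "sorted_wrt (\<ge>) v" "sum_list v = n" using v by (auto simp: SV_def)
      have rr: "r < length v" "r = 0 \<or> v!r < v!(r-1)" using r lv by (auto simp: Add_def)
      have TB: "jack_prob \<alpha> (Suc n) (v[r := Suc (v!r)]) * dd \<alpha> (v[r := Suc (v!r)]) r = jack_prob \<alpha> n v * mu \<alpha> v r"
        using trans_B[OF lv(2) rr a] lv by simp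
      show "F (v[r := Suc (v!r)], r) = jack_prob \<alpha> n v * PP \<alpha> u v * (mu \<alpha> v r * (u + zz \<alpha> v r))"
        unfolding F_def fst_conv snd_conv PP_inc[OF rr(1)] using TB
        by (metis (no_types, lifting) mult.assoc mult.commute mult.left_commute)
    qed
    finally show ?thesis .
  qed
  also have "\<dots> = (\<Sum>v\<in>SV N n. jack_prob \<alpha> n v * PP \<alpha> u v * u)"
  proof (intro sum.cong refl)
    fix v assume v: "v \<in> SV N n"
    have lv: "length v = Suc (Suc n)" "sorted_wrt (\<ge>) v" "sum_list v = n" using v NN by (auto simp: SV_def)
    have lz: "v!(Suc n) = 0" by (rule lastz[OF v]) simp
    have "(\<Sum>r\<in>Add v. mu \<alpha> v r * (u + zz \<alpha> v r)) = (\<Sum>r<length v. mu \<alpha> v r * (u + zz \<alpha> v r))"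
    proof (rule sum.mono_neutral_left)
      show "Add v \<subseteq> {..<length v}" using lv NN unfolding Add_def by auto
      show "\<forall>r\<in>{..<length v} - Add v. mu \<alpha> v r * (u + zz \<alpha> v r) = 0"
        using mu_zero[OF lv(2)] lv NN unfolding Add_def by auto
    qed simp
    also have "\<dots> = u * (\<Sum>r<length v. mu \<alpha> v r) + (\<Sum>r<length v. mu \<alpha> v r * zz \<alpha> v r)"
      by (simp add: algebra_simps sum.distrib sum_distrib_left)
    also have "\<dots> = u" using mu_sum[OF lv(2) a lv(1) lz] by simp
    finally have "(\<Sum>r\<in>Add v. mu \<alpha> v r * (u + zz \<alpha> v r)) = u" .
    then show "(\<Sum>r\<in>Add v. jack_prob \<alpha> n v * PP \<alpha> u v * (mu \<alpha> v r * (u + zz \<alpha> v r))) = jack_prob \<alpha> n v * PP \<alpha> u v * u"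
      by (simp add: sum_distrib_left[symmetric])
  qed
  also have "\<dots> = u * (\<Sum>v\<in>SV N n. jack_prob \<alpha> n v * PP \<alpha> u v)"
    by (simp add: sum_distrib_left mult.commute)
  finally show ?thesis .
qed





lemma boxes_pad: "boxes (lam @ replicate k 0) = boxes lam"
  by (auto simp: boxes_def nth_append split: if_splits)

lemma arm_pad: "arm (lam @ replicate k 0) = arm lam"
  by (rule ext) (simp add: arm_def boxes_pad)

lemma leg_pad: "leg (lam @ replicate k 0) = leg lam"
  by (rule ext) (simp add: leg_def boxes_pad)

lemma jack_prob_pad: "jack_prob \<alpha> n (lam @ replicate k 0) = jack_prob \<alpha> n lam"
  by (simp add: jack_prob_def boxes_pad arm_pad leg_pad)

lemma PP_pad: "PP \<alpha> u (lam @ replicate k 0) = PP \<alpha> u lam"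
  by (simp add: PP_def boxes_pad)

lemma elem_content_pad: "elem_content \<alpha> r (lam @ replicate k 0) = elem_content \<alpha> r lam"
  by (simp add: elem_content_def boxes_pad)

lemma length_le_sum: "\<forall>x\<in>set xs. 0 < x \<Longrightarrow> length xs \<le> sum_list (xs::nat list)"
  by (induction xs) auto

lemma sum_list_filter_pos: "sum_list (filter (\<lambda>x. 0 < x) xs) = sum_list (xs::nat list)"
  by (induction xs) auto

lemma sorted_split:
  "sorted_wrt (\<ge>) (b::nat list) \<Longrightarrow> filter (\<lambda>x. 0 < x) b @ replicate (length b - length (filter (\<lambda>x. 0 < x) b)) 0 = b"
proof (induction b)
  case Nil then show ?case by simp
next
  case (Cons a w)
  have sw: "sorted_wrt (\<ge>) w" and le: "\<forall>x\<in>set w. x \<le> a" using Cons.prems by auto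
  show ?case
  proof (cases "0 < a")
    case True
    have "length (filter (\<lambda>x. 0 < x) w) \<le> length w" by simp
    then show ?thesis using True Cons.IH[OF sw] by (simp add: Suc_diff_le)
  next
    case False
    then have "\<forall>x\<in>set w. x = 0" using le by auto
    then have "filter (\<lambda>x. 0 < x) w = []" "w = replicate (length w) 0"
      by (auto simp: filter_empty_conv intro: replicate_eqI)
    then show ?thesis using False by simp
  qed
qed

lemma is_partition_sorted: "is_partition lam \<Longrightarrow> sorted_wrt (\<ge>) lam"
  unfolding is_partition_def sorted_adj by simp

lemma sum_partitions_SV:
  assumes nN: "n \<le> N" and inv: "\<And>lam k. g (lam @ replicate k 0) = g lam"
  shows "(\<Sum>lam\<in>partitions n. g lam) = (\<Sum>v\<in>SV N n. (g v :: real))"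
proof (rule sum.reindex_bij_witness[where i = "filter (\<lambda>x. 0 < x)" and j = "\<lambda>lam. lam @ replicate (N - length lam) 0"])
  fix a assume a: "a \<in> partitions n"
  have pa: "is_partition a" "sum_list a = n" using a by (auto simp: partitions_def)
  have pos: "\<forall>x\<in>set a. 0 < x" using pa(1) by (simp add: is_partition_def)
  show "filter (\<lambda>x. 0 < x) (a @ replicate (N - length a) 0) = a"
    using pos by (simp add: filter_id_conv)
  have la: "length a \<le> N" using length_le_sum[OF pos] pa nN by simp
  have sa: "sorted_wrt (\<ge>) a" by (rule is_partition_sorted[OF pa(1)])
  have "sorted_wrt (\<ge>) (a @ replicate (N - length a) 0)"
    using sa by (auto simp: sorted_wrt_append sorted_wrt_iff_nth_less[of _ "replicate _ _"])
  then show "a @ replicate (N - length a) 0 \<in> SV N n"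
    using la pa by (simp add: SV_def)
  show "g (a @ replicate (N - length a) 0) = g a" by (rule inv)
next
  fix b assume b: "b \<in> SV N n"
  have sb: "length b = N" "sorted_wrt (\<ge>) b" "sum_list b = n" using b by (auto simp: SV_def)
  show "filter (\<lambda>x. 0 < x) b @ replicate (N - length (filter (\<lambda>x. 0 < x) b)) 0 = b"
    using sorted_split[OF sb(2)] sb(1) by simp
  have "sorted_wrt (\<ge>) (filter (\<lambda>x. 0 < x) b)" using sb(2) by (rule sorted_wrt_filter)
  then have "is_partition (filter (\<lambda>x. 0 < x) b)"
    unfolding is_partition_def sorted_adj[symmetric] by simp
  then show "filter (\<lambda>x. 0 < x) b \<in> partitions n"
    using sb(3) by (simp add: partitions_def sum_list_filter_pos)
qed

lemma partitions_0: "partitions 0 = {[]}"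
proof -
  have "x = []" if "\<forall>y\<in>set x. 0 < y" "\<forall>y\<in>set x. y = (0::nat)" for x
    using that by (cases x) auto
  then show ?thesis by (auto simp: partitions_def is_partition_def)
qed

lemma jack_PP:
  assumes a: "\<alpha> > 0"
  shows "jack_expect \<alpha> n (PP \<alpha> u) = u ^ n"
proof (induction n)
  case 0
  show ?case by (simp add: jack_expect_def partitions_0 jack_prob_def PP_def boxes_def)
next
  case (Suc n)
  define N where "N = Suc (Suc n)"
  have "jack_expect \<alpha> (Suc n) (PP \<alpha> u) = (\<Sum>w\<in>SV N (Suc n). jack_prob \<alpha> (Suc n) w * PP \<alpha> u w)"
    unfolding jack_expect_def by (rule sum_partitions_SV) (auto simp: N_def jack_prob_pad PP_pad)
  also have "\<dots> = u * (\<Sum>v\<in>SV N n. jack_prob \<alpha> n v * PP \<alpha> u v)"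
    by (rule step[OF a]) (simp add: N_def)
  also have "(\<Sum>v\<in>SV N n. jack_prob \<alpha> n v * PP \<alpha> u v) = jack_expect \<alpha> n (PP \<alpha> u)"
    unfolding jack_expect_def by (rule sum_partitions_SV[symmetric]) (auto simp: N_def jack_prob_pad PP_pad)
  finally show ?case using Suc by simp
qed





lemma card_boxes: "card (boxes lam) = sum_list lam"
proof (induction lam)
  case Nil then show ?case by (simp add: boxes_def)
next
  case (Cons a \<mu>)
  have d: "(\<lambda>j. (0::nat,j)) ` {..<a} \<inter> (\<lambda>(i,j). (Suc i, j)) ` boxes \<mu> = {}" by auto
  have i1: "inj_on (\<lambda>j. (0::nat,j)) {..<a}" by (auto simp: inj_on_def)
  have i2: "inj_on (\<lambda>(i,j). (Suc i, j)) (boxes \<mu>)" by (auto simp: inj_on_def)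
  show ?case unfolding boxes_cons
    by (subst card_Un_disjoint) (auto simp: finite_boxes d card_image[OF i1] card_image[OF i2] Cons.IH)
qed

lemma prod_expand:
  fixes c :: "'a \<Rightarrow> real"
  assumes fin: "finite B" and n: "card B = n"
  shows "(\<Prod>x\<in>B. u + c x) = (\<Sum>k\<le>n. u ^ (n - k) * (\<Sum>S\<in>{S. S \<subseteq> B \<and> card S = k}. \<Prod>x\<in>S. c x))"
proof -
  have "(\<Prod>x\<in>B. u + c x) = (\<Prod>x\<in>B. c x + u)" by (simp add: add.commute)
  also have "\<dots> = (\<Sum>X\<in>Pow B. (\<Prod>x\<in>X. c x) * (\<Prod>x\<in>B-X. u))" by (rule prod_add[OF fin])
  also have "\<dots> = (\<Sum>X\<in>Pow B. u ^ (n - card X) * (\<Prod>x\<in>X. c x))"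
  proof (rule sum.cong[OF refl])
    fix X assume "X \<in> Pow B"
    then have "card (B - X) = n - card X" using fin n by (simp add: card_Diff_subset finite_subset)
    then show "(\<Prod>x\<in>X. c x) * (\<Prod>x\<in>B-X. u) = u ^ (n - card X) * (\<Prod>x\<in>X. c x)" by simp
  qed
  also have "\<dots> = (\<Sum>k\<le>n. \<Sum>X\<in>{X\<in>Pow B. card X = k}. u ^ (n - card X) * (\<Prod>x\<in>X. c x))"
  proof (rule sum.group[symmetric])
    show "finite (Pow B)" using fin by simp
    show "finite {..n}" by simp
    show "card ` Pow B \<subseteq> {..n}" using fin n by (auto intro: card_mono)
  qed
  also have "\<dots> = (\<Sum>k\<le>n. u ^ (n - k) * (\<Sum>S\<in>{S. S \<subseteq> B \<and> card S = k}. \<Prod>x\<in>S. c x))"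
  proof (rule sum.cong[OF refl])
    fix k
    have e: "{X\<in>Pow B. card X = k} = {S. S \<subseteq> B \<and> card S = k}" by auto
    show "(\<Sum>X\<in>{X\<in>Pow B. card X = k}. u ^ (n - card X) * (\<Prod>x\<in>X. c x)) = u ^ (n - k) * (\<Sum>S\<in>{S. S \<subseteq> B \<and> card S = k}. \<Prod>x\<in>S. c x)"
      unfolding e sum_distrib_left by (rule sum.cong) auto
  qed
  finally show ?thesis .
qed

theorem lemma7:
  fixes \<alpha> :: real and n :: nat
  assumes "\<alpha> > 0"
  shows "(\<forall>m::nat. m \<ge> 1 \<longrightarrow>
            jack_expect \<alpha> n (\<lambda>lam. \<Prod>x\<in>boxes lam. real m + content \<alpha> x) = real m ^ n)
       \<and> (\<forall>r::nat. 1 \<le> r \<and> r \<le> n \<longrightarrow> jack_expect \<alpha> n (elem_content \<alpha> r) = 0)"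
proof
  have PPe: "(\<lambda>lam. \<Prod>x\<in>boxes lam. u + content \<alpha> x) = PP \<alpha> u" for u
    by (rule ext) (simp add: PP_def)
  show "\<forall>m::nat. m \<ge> 1 \<longrightarrow> jack_expect \<alpha> n (\<lambda>lam. \<Prod>x\<in>boxes lam. real m + content \<alpha> x) = real m ^ n"
    unfolding PPe using jack_PP[OF assms] by simp
  define cc where "cc k = jack_expect \<alpha> n (elem_content \<alpha> k)" for k
  have expand: "jack_expect \<alpha> n (PP \<alpha> u) = (\<Sum>k\<le>n. u ^ (n - k) * cc k)" for u
  proof -
    have "jack_expect \<alpha> n (PP \<alpha> u) = (\<Sum>lam\<in>partitions n. jack_prob \<alpha> n lam * (\<Sum>k\<le>n. u ^ (n - k) * elem_content \<alpha> k lam))"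
      unfolding jack_expect_def
    proof (rule sum.cong[OF refl])
      fix lam assume "lam \<in> partitions n"
      then have "card (boxes lam) = n" by (simp add: partitions_def card_boxes)
      then show "jack_prob \<alpha> n lam * PP \<alpha> u lam = jack_prob \<alpha> n lam * (\<Sum>k\<le>n. u ^ (n - k) * elem_content \<alpha> k lam)"
        unfolding PP_def elem_content_def by (simp add: prod_expand[OF finite_boxes])
    qed
    also have "\<dots> = (\<Sum>k\<le>n. u ^ (n - k) * cc k)"
      unfolding cc_def jack_expect_def sum_distrib_left
      by (subst sum.swap) (simp add: mult_ac)
    finally show ?thesis .
  qed
  have poly_eq: "(\<Sum>i\<le>n. cc (n - i) * u ^ i) = (\<Sum>i\<le>n. (if i = n then 1 else 0) * u ^ i)" for u
  proof -
    have "(\<Sum>i\<le>n. cc (n - i) * u ^ i) = (\<Sum>k\<le>n. u ^ (n - k) * cc k)"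
      by (rule sum.reindex_bij_witness[where i = "\<lambda>k. n - k" and j = "\<lambda>i. n - i"]) auto
    also have "\<dots> = u ^ n" using expand jack_PP[OF assms] by simp
    also have "\<dots> = (\<Sum>i\<le>n. (if i = n then 1 else 0) * u ^ i)"
    proof -
      have "(\<Sum>i\<le>n. (if i = n then 1 else 0) * u ^ i) = (\<Sum>i\<le>n. (if i = n then u ^ i else 0))"
        by (rule sum.cong) auto
      then show ?thesis by simp
    qed
    finally show ?thesis .
  qed
  then have coeffs: "\<forall>i\<le>n. cc (n - i) = (if i = n then 1 else 0)"
    using polyfun_eq_coeffs[where n=n and c="\<lambda>i. cc (n - i)" and d="\<lambda>i. if i = n then 1 else 0"] by blast
  show "\<forall>r::nat. 1 \<le> r \<and> r \<le> n \<longrightarrow> jack_expect \<alpha> n (elem_content \<alpha> r) = 0"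
  proof (intro allI impI)
    fix r :: nat assume r: "1 \<le> r \<and> r \<le> n"
    have "cc (n - (n - r)) = 0" using spec[OF coeffs, of "n - r"] r by auto
    then show "jack_expect \<alpha> n (elem_content \<alpha> r) = 0" using r by (simp add: cc_def)
  qed
qed



end
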